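(* Let $l$ be a prime and $n\ge 2$. For $1\le r\le n$ let $\alpha_r\in S_{l^n}$ be the product of the $l^{r-1}$ disjoint $l$-cycles $(j,\ j+l^{r-1},\ j+2l^{r-1},\dots,\ j+(l-1)l^{r-1})$, $j=1,\dots,l^{r-1}$ (so $\alpha_1=(1\,2\,\cdots\,l)$), and let $\mathcal{G}_n=\langle\alpha_1,\dots,\alpha_n\rangle$, an $l$-Sylow subgroup of $S_{l^n}$ isomorphic to the $n$-fold iterated wreath product $(\cdots((C_l\wr C_l)\wr C_l)\cdots)\wr C_l$. Let $\mathcal{H}=\langle\alpha_1\rangle$. If $n\ge 3$, or if $n=2$ and $l\ge 5$, then every metacyclic subgroup $D\le\mathcal{G}_n$ satisfies $S(D,\mathcal{H})>1$ (double cosets in $\mathcal{G}_n$).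
   Context: A group is metacyclic if it has a cyclic normal subgroup with cyclic quotient. For subgroups $A,B$ of a finite group $\mathcal{G}$, a double coset $AxB$ is split if $|AxB|=|A||B|$ (equivalently $x^{-1}Ax\cap B=1$), and $S(A,B)$ is the number of distinct split double cosets. *)

theory Defs
  imports "HOL-Computational_Algebra.Primes" "HOL-Algebra.Sym_Groups" "HOL-Algebra.Elementary_Groups"
begin

definition alpha :: "nat \<Rightarrow> nat \<Rightarrow> (nat \<Rightarrow> nat)" where
  "alpha l r = foldr (\<lambda>j f. cycle_of_list (map (\<lambda>k. j + k * l ^ (r - 1)) [0..<l]) \<circ> f)
                     [1..<l ^ (r - 1) + 1] id"

definition Gn :: "nat \<Rightarrow> nat \<Rightarrow> (nat \<Rightarrow> nat) monoid" where
  "Gn l n = subgroup_generated (sym_group (l ^ n)) {alpha l r | r. 1 \<le> r \<and> r \<le> n}"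

definition Hsub :: "nat \<Rightarrow> nat \<Rightarrow> (nat \<Rightarrow> nat) set" where
  "Hsub l n = generate (Gn l n) {alpha l 1}"

definition metacyclic_subgroup :: "('a, 'b) monoid_scheme \<Rightarrow> 'a set \<Rightarrow> bool" where
  "metacyclic_subgroup G D \<longleftrightarrow>
     (\<exists>N. N \<lhd> G\<lparr>carrier := D\<rparr> \<and> cyclic_group (G\<lparr>carrier := N\<rparr>)
          \<and> cyclic_group (G\<lparr>carrier := D\<rparr> Mod N))"

definition double_coset :: "('a, 'b) monoid_scheme \<Rightarrow> 'a set \<Rightarrow> 'a \<Rightarrow> 'a set \<Rightarrow> 'a set" where
  "double_coset G A x B = {a \<otimes>\<^bsub>G\<^esub> x \<otimes>\<^bsub>G\<^esub> b | a b. a \<in> A \<and> b \<in> B}"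

text \<open>S(A,B): number of distinct split double cosets A x B (|AxB| = |A||B|), x in G.\<close>
definition split_count :: "('a, 'b) monoid_scheme \<Rightarrow> 'a set \<Rightarrow> 'a set \<Rightarrow> nat" where
  "split_count G A B = card {double_coset G A x B | x. x \<in> carrier G \<and>
      card (double_coset G A x B) = card A * card B}"

end

theory Submission
  imports Defs "HOL-Algebra.Multiplicative_Group"
begin


lemma cyclic_roots:
  fixes K :: "('a, 'b) monoid_scheme" (structure)
  assumes grp: "group K" and cyc: "cyclic_group K" and fin: "finite (carrier K)" and l0: "0 < (l::nat)"
  shows "card {y \<in> carrier K. y [^]\<^bsub>K\<^esub> l = \<one>\<^bsub>K\<^esub>} \<le> l"
proof -
  interpret group K by (rule grp)
  obtain g where g: "g \<in> carrier K" "subgroup_generated K {g} = K"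
    using cyc unfolding cyclic_group_def by blast
  have "carrier K = generate K {g}"
    by (metis g carrier_subgroup_generated inf.absorb2 empty_subsetI insert_subset)
  also have "\<dots> = {g [^] k | k. k \<in> (UNIV :: nat set)}"
    using generate_pow_on_finite_carrier[OF fin g(1)] .
  finally have carr: "carrier K = {g [^] k | k. k \<in> (UNIV :: nat set)}" .
  define m where "m = ord g"
  have m0: "m > 0" using ord_ge_1[OF fin g(1)] m_def by simp
  have pm: "g [^] k = g [^] (k mod m)" for k :: nat
  proof -
    have "g [^] k = g [^] (m * (k div m) + k mod m)" by (simp only: mult_div_mod_eq)
    also have "\<dots> = g [^] (m * (k div m)) \<otimes> g [^] (k mod m)"
      using g(1) by (simp add: nat_pow_mult)
    also have "\<dots> = (g [^] m) [^] (k div m) \<otimes> g [^] (k mod m)"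
      using g(1) by (simp add: nat_pow_pow)
    also have "\<dots> = g [^] (k mod m)" using g(1) m_def by (simp add: pow_ord_eq_1)
    finally show ?thesis .
  qed
  have sub: "{y \<in> carrier K. y [^] l = \<one>} \<subseteq> (\<lambda>k. g [^] k) ` {k. k < m \<and> m dvd k * l}"
  proof
    fix y assume y: "y \<in> {y \<in> carrier K. y [^] l = \<one>}"
    then obtain k :: nat where k: "y = g [^] k" using carr by auto
    have "y = g [^] (k mod m)" using k pm by simp
    moreover have "g [^] ((k mod m) * l) = \<one>"
      using y \<open>y = g [^] (k mod m)\<close> g(1) by (simp add: nat_pow_pow)
    hence "m dvd (k mod m) * l" using pow_eq_id[OF g(1)] unfolding m_def by blast
    moreover have "k mod m < m" using m0 by simp
    ultimately show "y \<in> (\<lambda>k. g [^] k) ` {k. k < m \<and> m dvd k * l}" by blast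
  qed
  have inj: "inj_on (\<lambda>k. k * l div m) {k. k < m \<and> m dvd k * l}"
  proof (rule inj_onI)
    fix x y assume x: "x \<in> {k. k < m \<and> m dvd k * l}" and y: "y \<in> {k. k < m \<and> m dvd k * l}"
      and e: "x * l div m = y * l div m"
    have "x * l = (x * l div m) * m" using x by simp
    moreover have "y * l = (y * l div m) * m" using y by simp
    ultimately have "x * l = y * l" using e by simp
    thus "x = y" using l0 by simp
  qed
  have img: "(\<lambda>k. k * l div m) ` {k. k < m \<and> m dvd k * l} \<subseteq> {..<l}"
  proof
    fix z assume "z \<in> (\<lambda>k. k * l div m) ` {k. k < m \<and> m dvd k * l}"
    then obtain k where k: "k < m" "z = k * l div m" by auto
    have "k * l < m * l" using k l0 by simp
    hence "k * l div m < l" using m0 by (metis div_less_iff_less_mult mult.commute)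
    thus "z \<in> {..<l}" using k by simp
  qed
  have "card {y \<in> carrier K. y [^] l = \<one>} \<le> card ((\<lambda>k. g [^] k) ` {k. k < m \<and> m dvd k * l})"
    by (rule card_mono) (auto simp: sub)
  also have "\<dots> \<le> card {k. k < m \<and> m dvd k * l}" by (rule card_image_le) simp
  also have "\<dots> = card ((\<lambda>k. k * l div m) ` {k. k < m \<and> m dvd k * l})"
    using card_image[OF inj] by simp
  also have "\<dots> \<le> card {..<l}" by (rule card_mono[OF _ img]) simp
  finally show ?thesis by simp
qed

lemma meta_bound:
  fixes G :: "('a, 'b) monoid_scheme" (structure)
  assumes grp: "group G" and fin: "finite (carrier G)" and sD: "subgroup D G"
    and meta: "metacyclic_subgroup G D" and l0: "0 < (l::nat)"
    and FD: "F \<subseteq> D" and Fl: "\<forall>f\<in>F. f [^] l = \<one>"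
    and Fc: "\<forall>f\<in>F. \<forall>f'\<in>F. f \<otimes> f' = f' \<otimes> f"
  shows "card F \<le> l * l"
proof -
  interpret group G by (rule grp)
  define K where "K = G\<lparr>carrier := D\<rparr>"
  have gK: "group K" unfolding K_def using subgroup_imp_group[OF sD] .
  obtain N where N: "N \<lhd> K" "cyclic_group (G\<lparr>carrier := N\<rparr>)" "cyclic_group (K Mod N)"
    using meta unfolding metacyclic_subgroup_def K_def by blast
  interpret K: group K by (rule gK)
  interpret nN: normal N K by (rule N(1))
  have ND: "N \<subseteq> D" using nN.subset unfolding K_def by simp
  have DG: "D \<subseteq> carrier G" using sD subgroup.subset by blast
  have finD: "finite D" using fin DG finite_subset by blast
  have KN: "K\<lparr>carrier := N\<rparr> = G\<lparr>carrier := N\<rparr>" unfolding K_def by simp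
  have gN: "group (G\<lparr>carrier := N\<rparr>)" using K.subgroup_imp_group[OF nN.subgroup_axioms] KN by simp
  have finN: "finite N" using finD ND finite_subset by blast
  define R where "R = {y \<in> N. y [^] l = \<one>}"
  have R_eq: "R = {y \<in> carrier (G\<lparr>carrier := N\<rparr>). y [^]\<^bsub>G\<lparr>carrier := N\<rparr>\<^esub> l = \<one>\<^bsub>G\<lparr>carrier := N\<rparr>\<^esub>}"
    unfolding R_def by (simp add: nat_pow_consistent[symmetric])
  have cardR: "card R \<le> l"
    unfolding R_eq by (rule cyclic_roots[OF gN N(2) _ l0]) (simp add: finN)
  have Kc: "carrier K = D" unfolding K_def by simp
  define Q where "Q = K Mod N"
  have gQ: "group Q" unfolding Q_def by (rule nN.factorgroup_is_group)
  have finQ: "finite (carrier Q)" unfolding Q_def carrier_FactGroup using finD Kc by simp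
  define Qr where "Qr = {q \<in> carrier Q. q [^]\<^bsub>Q\<^esub> l = \<one>\<^bsub>Q\<^esub>}"
  have cardQr: "card Qr \<le> l"
    unfolding Qr_def by (rule cyclic_roots[OF gQ _ finQ l0]) (use N(3) Q_def in simp)
  define \<phi> where "\<phi> = (\<lambda>x. N #>\<^bsub>K\<^esub> x)"
  have hom: "\<phi> \<in> hom K Q" unfolding \<phi>_def Q_def by (rule nN.r_coset_hom_Mod)
  have powK: "x [^]\<^bsub>K\<^esub> (k::nat) = x [^] k" for x k unfolding K_def by (simp add: nat_pow_consistent[symmetric])
  have img: "\<phi> ` F \<subseteq> Qr"
  proof
    fix q assume "q \<in> \<phi> ` F"
    then obtain f where f: "f \<in> F" "q = \<phi> f" by auto
    have fK: "f \<in> carrier K" using f FD Kc by auto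
    have "q [^]\<^bsub>Q\<^esub> l = \<phi> (f [^]\<^bsub>K\<^esub> l)"
      using hom_nat_pow[OF hom fK gK gQ] f by simp
    also have "\<dots> = \<phi> \<one>\<^bsub>K\<^esub>" using Fl f powK by (simp add: K_def)
    also have "\<dots> = \<one>\<^bsub>Q\<^esub>" using hom gK gQ by (simp add: group_hom.hom_one group_hom_axioms_def group_hom_def)
    moreover have "q \<in> carrier Q" using hom fK f(2) unfolding hom_def by blast
    ultimately show "q \<in> Qr" unfolding Qr_def by blast
  qed
  have fib: "card {f \<in> F. \<phi> f = q} \<le> l" for q
  proof (cases "{f \<in> F. \<phi> f = q} = {}")
    case True then show ?thesis by (metis card.empty zero_le)
  next
    case False
    then obtain f0 where f0: "f0 \<in> F" "\<phi> f0 = q" by auto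
    have f0D: "f0 \<in> D" using f0 FD by auto
    have f0G: "f0 \<in> carrier G" using f0D DG by auto
    have "inj_on (\<lambda>f. f \<otimes> inv f0) {f \<in> F. \<phi> f = q}"
    proof (rule inj_onI)
      fix x y assume "x \<in> {f \<in> F. \<phi> f = q}" "y \<in> {f \<in> F. \<phi> f = q}" "x \<otimes> inv f0 = y \<otimes> inv f0"
      moreover have "x \<in> carrier G" "y \<in> carrier G" using \<open>x \<in> _\<close> \<open>y \<in> _\<close> FD DG by auto
      ultimately show "x = y" using f0G by simp
    qed
    moreover have "(\<lambda>f. f \<otimes> inv f0) ` {f \<in> F. \<phi> f = q} \<subseteq> R"
    proof
      fix z assume "z \<in> (\<lambda>f. f \<otimes> inv f0) ` {f \<in> F. \<phi> f = q}"
      then obtain f where f: "f \<in> F" "\<phi> f = q" "z = f \<otimes> inv f0" by auto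
      have fD: "f \<in> D" using f FD by auto
      have fG: "f \<in> carrier G" using fD DG by auto
      have "f \<in> N #>\<^bsub>K\<^esub> f" using K.rcos_self[of f N] fD Kc nN.subgroup_axioms by simp
      hence "f \<in> N #>\<^bsub>K\<^esub> f0" using f f0 unfolding \<phi>_def by simp
      hence "f \<otimes>\<^bsub>K\<^esub> inv\<^bsub>K\<^esub> f0 \<in> N"
        using nN.rcos_module_imp[OF gK] f0D Kc by simp
      hence zN: "z \<in> N" using f m_inv_consistent[OF sD f0D] unfolding K_def by simp
      have "inv f0 \<otimes> (f \<otimes> f0) \<otimes> inv f0 = inv f0 \<otimes> (f0 \<otimes> f) \<otimes> inv f0"
        using Fc f(1) f0(1) by simp
      hence comm: "f \<otimes> inv f0 = inv f0 \<otimes> f"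
        using fG f0G inv_solve_left[of "f \<otimes> inv f0" f0 f] by (simp add: m_assoc)
      have "z [^] l = f [^] l \<otimes> (inv f0) [^] l"
        using pow_mult_distrib[OF comm fG] f0G f by simp
      also have "\<dots> = \<one>" using Fl f(1) f0(1) f0G by (simp add: nat_pow_inv)
      finally show "z \<in> R" unfolding R_def using zN by simp
    qed
    ultimately have "card {f \<in> F. \<phi> f = q} \<le> card R"
      by (intro card_inj_on_le) (auto simp: R_def finN)
    then show ?thesis using cardR by simp
  qed
  have finF: "finite F" using finD FD finite_subset by blast
  have Fu: "F = (\<Union>q\<in>\<phi> ` F. {f \<in> F. \<phi> f = q})" by auto
  have "card F \<le> (\<Sum>q\<in>\<phi> ` F. card {f \<in> F. \<phi> f = q})"
    using card_UN_le[OF finite_imageI[OF finF], of "\<lambda>q. {f \<in> F. \<phi> f = q}" \<phi>] Fu by simp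
  also have "\<dots> \<le> card (\<phi> ` F) * l" using fib sum_bounded_above[of "\<phi> ` F" "\<lambda>q. card {f \<in> F. \<phi> f = q}" l] by simp
  also have "\<dots> \<le> card Qr * l"
    using img finQ by (simp add: card_mono Qr_def finite_subset)
  also have "\<dots> \<le> l * l" using cardQr by simp
  finally show ?thesis .
qed



context group begin

lemma sub_pow_closed: "subgroup D G \<Longrightarrow> x \<in> D \<Longrightarrow> x [^] (n::nat) \<in> D"
  by (induct n) (auto simp: subgroup.one_closed subgroup.m_closed)

lemma conj_pow: "x \<in> carrier G \<Longrightarrow> u \<in> carrier G \<Longrightarrow> (x \<otimes> u \<otimes> inv x) [^] (n::nat) = x \<otimes> u [^] n \<otimes> inv x"
proof (induct n)
  case 0 then show ?case by simp
next
  case (Suc n)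
  have "(x \<otimes> u \<otimes> inv x) [^] Suc n = (x \<otimes> u [^] n \<otimes> inv x) \<otimes> (x \<otimes> u \<otimes> inv x)"
    using Suc by simp
  also have "\<dots> = x \<otimes> (u [^] n \<otimes> u) \<otimes> inv x"
  proof -
    have h: "inv x \<otimes> (x \<otimes> w) = w" if "w \<in> carrier G" for w
      using that Suc.prems by (simp add: m_assoc[symmetric])
    show ?thesis using Suc.prems by (simp add: m_assoc h)
  qed
  finally show ?case by simp
qed

lemma pow_mod_l: "a \<in> carrier G \<Longrightarrow> a [^] (l::nat) = \<one> \<Longrightarrow> a [^] k = a [^] (k mod l)"
proof -
  assume a: "a \<in> carrier G" and al: "a [^] l = \<one>"
  have "a [^] k = a [^] (l * (k div l) + k mod l)" by (simp only: mult_div_mod_eq)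
  also have "\<dots> = a [^] (l * (k div l)) \<otimes> a [^] (k mod l)" using a by (simp add: nat_pow_mult)
  also have "\<dots> = (a [^] l) [^] (k div l) \<otimes> a [^] (k mod l)" using a by (simp add: nat_pow_pow)
  finally show ?thesis using al a by simp
qed

lemma inv_cancel_a [simp]: "x \<in> carrier G \<Longrightarrow> z \<in> carrier G \<Longrightarrow> x \<otimes> (inv x \<otimes> z) = z"
  by (simp add: m_assoc[symmetric])

lemma inv_cancel_b [simp]: "x \<in> carrier G \<Longrightarrow> z \<in> carrier G \<Longrightarrow> inv x \<otimes> (x \<otimes> z) = z"
  by (simp add: m_assoc[symmetric])

lemma move4: "A \<in> carrier G \<Longrightarrow> B \<in> carrier G \<Longrightarrow> C \<in> carrier G \<Longrightarrow> D \<in> carrier G \<Longrightarrow> Y \<in> carrier G \<Longrightarrow>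
  B \<otimes> Y = Y \<otimes> B \<Longrightarrow> C \<otimes> Y = Y \<otimes> C \<Longrightarrow> D \<otimes> Y = Y \<otimes> D \<Longrightarrow>
  A \<otimes> B \<otimes> C \<otimes> D \<otimes> Y = A \<otimes> Y \<otimes> B \<otimes> C \<otimes> D"
proof -
  assume c: "A \<in> carrier G" "B \<in> carrier G" "C \<in> carrier G" "D \<in> carrier G" "Y \<in> carrier G"
    and h: "B \<otimes> Y = Y \<otimes> B" "C \<otimes> Y = Y \<otimes> C" "D \<otimes> Y = Y \<otimes> D"
  have "A \<otimes> B \<otimes> C \<otimes> D \<otimes> Y = A \<otimes> B \<otimes> C \<otimes> (D \<otimes> Y)" using c by (simp add: m_assoc)
  also have "\<dots> = A \<otimes> B \<otimes> C \<otimes> (Y \<otimes> D)" by (simp only: h(3))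
  also have "\<dots> = A \<otimes> B \<otimes> (C \<otimes> Y) \<otimes> D" using c by (simp add: m_assoc)
  also have "\<dots> = A \<otimes> B \<otimes> (Y \<otimes> C) \<otimes> D" by (simp only: h(2))
  also have "\<dots> = A \<otimes> (B \<otimes> Y) \<otimes> C \<otimes> D" using c by (simp add: m_assoc)
  also have "\<dots> = A \<otimes> (Y \<otimes> B) \<otimes> C \<otimes> D" by (simp only: h(1))
  also have "\<dots> = A \<otimes> Y \<otimes> B \<otimes> C \<otimes> D" using c by (simp add: m_assoc)
  finally show ?thesis .
qed

lemma comm_mult: "x \<in> carrier G \<Longrightarrow> y \<in> carrier G \<Longrightarrow> z \<in> carrier G \<Longrightarrow>
   x \<otimes> y = y \<otimes> x \<Longrightarrow> x \<otimes> z = z \<otimes> x \<Longrightarrow> x \<otimes> (y \<otimes> z) = (y \<otimes> z) \<otimes> x"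
  by (metis m_assoc)

lemma comm_pow: "x \<in> carrier G \<Longrightarrow> y \<in> carrier G \<Longrightarrow> x \<otimes> y = y \<otimes> x \<Longrightarrow> x \<otimes> y [^] (n::nat) = y [^] n \<otimes> x"
  using group_commutes_pow[of y x n] by simp

lemma pow_l_mult: "x \<in> carrier G \<Longrightarrow> y \<in> carrier G \<Longrightarrow> x \<otimes> y = y \<otimes> x \<Longrightarrow>
   x [^] (l::nat) = \<one> \<Longrightarrow> y [^] l = \<one> \<Longrightarrow> (x \<otimes> y) [^] l = \<one>"
  by (simp add: pow_mult_distrib)

lemma pow_l_pow: "x \<in> carrier G \<Longrightarrow> x [^] (l::nat) = \<one> \<Longrightarrow> (x [^] (k::nat)) [^] l = \<one>"
proof -
  assume "x \<in> carrier G" "x [^] l = \<one>"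
  then have "(x [^] k) [^] l = x [^] (k * l)" by (simp add: nat_pow_pow)
  also have "\<dots> = x [^] (l * k)" by (simp add: mult.commute)
  also have "\<dots> = (x [^] l) [^] k" using \<open>x \<in> carrier G\<close> by (simp add: nat_pow_pow)
  finally have "(x [^] k) [^] l = (x [^] l) [^] k" .
  then show ?thesis using \<open>x [^] l = \<one>\<close> by simp
qed

end



lemma abstract_main:
  fixes G :: "('a, 'b) monoid_scheme" (structure) and c g :: "nat \<Rightarrow> 'a" and l :: nat
  assumes grp: "group G" and fin: "finite (carrier G)" and pl: "prime l"
    and aG: "a \<in> carrier G" and al: "a [^] l = \<one>"
    and sD: "subgroup D G" and meta: "metacyclic_subgroup G D"
    and c0: "c 0 = a"
    and cG: "\<And>i. i < 4 \<Longrightarrow> c i \<in> carrier G"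
    and gG: "\<And>i. i < 4 \<Longrightarrow> g i \<in> carrier G"
    and conj: "\<And>i. i < 4 \<Longrightarrow> c i \<otimes> g i = g i \<otimes> a"
    and ccomm: "\<And>i j. i < 4 \<Longrightarrow> j < 4 \<Longrightarrow> c i \<otimes> c j = c j \<otimes> c i"
    and cl: "\<And>i. i < 4 \<Longrightarrow> c i [^] l = \<one>"
    and indep: "\<And>k k'. k \<in> PiE {..<4::nat} (\<lambda>_. {..<l}) \<Longrightarrow> k' \<in> PiE {..<4::nat} (\<lambda>_. {..<l}) \<Longrightarrow>
        c 0 [^] k 0 \<otimes> c 1 [^] k 1 \<otimes> c 2 [^] k 2 \<otimes> c 3 [^] k 3 =
        c 0 [^] k' 0 \<otimes> c 1 [^] k' 1 \<otimes> c 2 [^] k' 2 \<otimes> c 3 [^] k' 3 \<Longrightarrow> k = k'"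
  shows "split_count G D (generate G {a}) > 1"
proof -
  interpret group G by (rule grp)
  define H where "H = generate G {a}"
  define P where "P k = c 0 [^] k 0 \<otimes> c 1 [^] k 1 \<otimes> c 2 [^] k 2 \<otimes> c 3 [^] k 3" for k :: "nat \<Rightarrow> nat"
  define I where "I = PiE {..<4::nat} (\<lambda>_. {..<l})"
  define E where "E = P ` I"
  have l2: "l \<ge> 2" using pl prime_ge_2_nat by blast
  have p3: "l * l * l < l ^ 4"
  proof -
    have "0 < l * l * l" using l2 by simp
    hence "l * l * l * 1 < l * l * l * l" using l2 by (intro mult_strict_left_mono) auto
    thus ?thesis by (simp add: power4_eq_xxxx)
  qed
  have p2: "l * l < l ^ 4"
  proof -
    have "l * l * 1 \<le> l * l * l" using l2 by (intro mult_le_mono2) auto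
    thus ?thesis using p3 by (metis mult.right_neutral order_le_less_trans)
  qed
  have cardI: "card I = l ^ 4"
  proof -
    have "card I = (\<Prod>i\<in>{..<4::nat}. card {..<l})" unfolding I_def
      by (rule card_PiE) simp
    also have "\<dots> = l ^ 4" by (simp only: card_lessThan prod_constant)
    finally show ?thesis .
  qed
  have injP: "inj_on P I"
  proof (rule inj_onI)
    fix k k' assume "k \<in> I" "k' \<in> I" "P k = P k'"
    thus "k = k'" using indep[of k k'] unfolding I_def P_def by simp
  qed
  have cardE: "card E = l ^ 4" unfolding E_def using card_image[OF injP] cardI by simp
  have c123: "c 1 \<in> carrier G" "c 2 \<in> carrier G" "c 3 \<in> carrier G" "c 0 \<in> carrier G" using cG by auto
  have PG: "P k \<in> carrier G" for k using c123 by (simp add: P_def)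
  have EG: "E \<subseteq> carrier G" unfolding E_def using PG by auto
  have powcomm: "c i [^] (m::nat) \<otimes> c j [^] (n::nat) = c j [^] n \<otimes> c i [^] m" if "i < 4" "j < 4" for i j m n
  proof -
    have "c i \<otimes> c j [^] n = c j [^] n \<otimes> c i" using comm_pow[OF cG[OF that(1)] cG[OF that(2)] ccomm[OF that]] .
    hence "c j [^] n \<otimes> c i [^] m = c i [^] m \<otimes> c j [^] n"
      using comm_pow[of "c j [^] n" "c i" m] cG that by simp
    thus ?thesis by simp
  qed
  have Pcomm: "x \<otimes> P k = P k \<otimes> x" if x: "x \<in> carrier G" and xc: "\<And>i. i < 4 \<Longrightarrow> x \<otimes> c i = c i \<otimes> x" for x k
  proof -
    have h: "x \<otimes> c i [^] (k i) = c i [^] (k i) \<otimes> x" if "i < 4" for i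
      using comm_pow[OF x cG[OF that] xc[OF that]] .
    have "x \<otimes> (c 0 [^] k 0 \<otimes> c 1 [^] k 1) = (c 0 [^] k 0 \<otimes> c 1 [^] k 1) \<otimes> x"
      using comm_mult[OF x _ _ h[of 0] h[of 1]] c123 by simp
    hence "x \<otimes> (c 0 [^] k 0 \<otimes> c 1 [^] k 1 \<otimes> c 2 [^] k 2) = (c 0 [^] k 0 \<otimes> c 1 [^] k 1 \<otimes> c 2 [^] k 2) \<otimes> x"
      using comm_mult[OF x _ _ _ h[of 2]] c123 by simp
    hence "x \<otimes> (c 0 [^] k 0 \<otimes> c 1 [^] k 1 \<otimes> c 2 [^] k 2 \<otimes> c 3 [^] k 3) = (c 0 [^] k 0 \<otimes> c 1 [^] k 1 \<otimes> c 2 [^] k 2 \<otimes> c 3 [^] k 3) \<otimes> x"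
      using comm_mult[OF x _ _ _ h[of 3]] c123 by simp
    thus ?thesis unfolding P_def .
  qed
  have cP: "c i \<otimes> P k = P k \<otimes> c i" if "i < 4" for i k
    using Pcomm[OF cG[OF that]] ccomm[OF that] by simp
  have Ecomm: "e \<otimes> e' = e' \<otimes> e" if ee: "e \<in> E" "e' \<in> E" for e e'
  proof -
    obtain k where k: "e = P k" using ee(1) E_def by auto
    obtain k' where k': "e' = P k'" using ee(2) E_def by auto
    show ?thesis using Pcomm[OF PG, of k k'] cP by (simp add: k k')
  qed
  have aE: "e \<otimes> a = a \<otimes> e" if "e \<in> E" for e
    using that cP[of 0] c0 unfolding E_def by auto
  have El: "e [^] l = \<one>" if ee: "e \<in> E" for e
  proof -
    obtain k where k: "e = P k" using ee E_def by auto
    have pl': "(c i [^] (k i)) [^] l = \<one>" if "i < 4" for i using pow_l_pow[OF cG[OF that] cl[OF that]] .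
    have "(c 0 [^] k 0 \<otimes> c 1 [^] k 1) [^] l = \<one>"
      using pow_l_mult[OF _ _ powcomm pl'[of 0] pl'[of 1]] c123 by simp
    moreover have "(c 0 [^] k 0 \<otimes> c 1 [^] k 1) \<otimes> c 2 [^] k 2 = c 2 [^] k 2 \<otimes> (c 0 [^] k 0 \<otimes> c 1 [^] k 1)"
      using comm_mult[of "c 2 [^] k 2" "c 0 [^] k 0" "c 1 [^] k 1"] powcomm c123 by simp
    ultimately have "(c 0 [^] k 0 \<otimes> c 1 [^] k 1 \<otimes> c 2 [^] k 2) [^] l = \<one>"
      using pow_l_mult[OF _ _ _ _ pl'[of 2]] c123 by simp
    moreover have "(c 0 [^] k 0 \<otimes> c 1 [^] k 1 \<otimes> c 2 [^] k 2) \<otimes> c 3 [^] k 3 = c 3 [^] k 3 \<otimes> (c 0 [^] k 0 \<otimes> c 1 [^] k 1 \<otimes> c 2 [^] k 2)"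
      using comm_mult[of "c 3 [^] k 3" "c 0 [^] k 0 \<otimes> c 1 [^] k 1" "c 2 [^] k 2"]
        comm_mult[of "c 3 [^] k 3" "c 0 [^] k 0" "c 1 [^] k 1"] powcomm c123 by simp
    ultimately have "(c 0 [^] k 0 \<otimes> c 1 [^] k 1 \<otimes> c 2 [^] k 2 \<otimes> c 3 [^] k 3) [^] l = \<one>"
      using pow_l_mult[OF _ _ _ _ pl'[of 3]] c123 by simp
    thus ?thesis using k P_def by simp
  qed
  have Eclos: "e \<otimes> a [^] (j::nat) \<in> E" if ee: "e \<in> E" for e j
  proof -
    obtain k where k: "k \<in> I" "e = P k" using ee E_def by auto
    define k' where "k' = k(0 := (k 0 + j) mod l)"
    have k'I: "k' \<in> I" using k(1) l2 unfolding k'_def I_def by (auto simp: PiE_iff extensional_def)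
    have "P k \<otimes> c 0 [^] j = c 0 [^] k 0 \<otimes> c 0 [^] j \<otimes> c 1 [^] k 1 \<otimes> c 2 [^] k 2 \<otimes> c 3 [^] k 3"
      unfolding P_def by (rule move4) (use c123 powcomm in auto)
    also have "c 0 [^] k 0 \<otimes> c 0 [^] j = c 0 [^] (k' 0)"
      using c123 pow_mod_l[OF _ cl[of 0]] by (simp add: nat_pow_mult k'_def)
    finally have "P k \<otimes> c 0 [^] j = P k'" unfolding P_def k'_def by simp
    thus ?thesis using k k'I c0 E_def by auto
  qed
  have sH: "subgroup H G" unfolding H_def by (rule generate_is_subgroup) (use aG in simp)
  have Hpow: "H = {a [^] k | k. k \<in> (UNIV :: nat set)}"
    unfolding H_def by (rule generate_pow_on_finite_carrier[OF fin aG])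
  have cardH: "card H \<le> l"
  proof -
    have "card H = ord a" unfolding H_def using generate_pow_card[OF aG] by simp
    moreover have "ord a dvd l" using al pow_eq_id[OF aG] by simp
    ultimately show ?thesis using l2 by (simp add: dvd_imp_le)
  qed
  have HG: "H \<subseteq> carrier G" using sH subgroup.subset by blast
  have DG: "D \<subseteq> carrier G" using sD subgroup.subset by blast
  have finD: "finite D" using fin DG finite_subset by blast
  have finH: "finite H" using fin HG finite_subset by blast
  define X where "X = {x \<in> carrier G. x \<otimes> a \<otimes> inv x \<notin> D}"
  define DC where "DC x = double_coset G D x H" for x
  have DC_img: "DC x = (\<lambda>(d, h). d \<otimes> x \<otimes> h) ` (D \<times> H)" for x
    unfolding DC_def double_coset_def by auto
  have split: "card (DC x) = card D * card H" if xX: "x \<in> X" for x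
  proof -
    have xG: "x \<in> carrier G" using xX X_def by auto
    have "inj_on (\<lambda>(d, h). d \<otimes> x \<otimes> h) (D \<times> H)"
    proof (rule inj_onI, clarify)
      fix d h d' h' assume d: "d \<in> D" "h \<in> H" "d' \<in> D" "h' \<in> H" and eq: "d \<otimes> x \<otimes> h = d' \<otimes> x \<otimes> h'"
      have dG: "d \<in> carrier G" "d' \<in> carrier G" "h \<in> carrier G" "h' \<in> carrier G" using d DG HG by auto
      define u where "u = h \<otimes> inv h'"
      have uH: "u \<in> H" unfolding u_def using d sH by (simp add: subgroup.m_closed subgroup.m_inv_closed)
      have uG: "u \<in> carrier G" using uH HG by auto
      define w where "w = x \<otimes> u \<otimes> inv x"
      have "d \<otimes> w = (d \<otimes> x \<otimes> h) \<otimes> inv h' \<otimes> inv x"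
        unfolding w_def u_def using dG xG by (simp add: m_assoc)
      also have "\<dots> = d'" unfolding eq using dG xG by (simp add: m_assoc)
      finally have "d \<otimes> w = d'" .
      hence "inv d \<otimes> (d \<otimes> w) = inv d \<otimes> d'" by simp
      hence "w = inv d \<otimes> d'" using dG xG uG unfolding w_def by simp
      hence wD: "w \<in> D" using d sD by (simp add: subgroup.m_closed subgroup.m_inv_closed)
      have u1: "u = \<one>"
      proof (rule ccontr)
        assume un: "u \<noteq> \<one>"
        obtain j :: nat where j: "u = a [^] j" using uH Hpow by auto
        have "\<not> l dvd j"
        proof
          assume "l dvd j"
          then obtain t where "j = l * t" by auto
          hence "u = (a [^] l) [^] t" using j aG by (simp add: nat_pow_pow)
          thus False using un al by simp
        qed
        hence j0: "j \<noteq> 0" by (metis dvd_0_right)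
        have "coprime j l" using prime_imp_coprime[OF pl \<open>\<not> l dvd j\<close>] by (simp add: coprime_commute)
        then obtain s t where st: "j * s = l * t + 1" using bezout_nat[OF j0, of l] by auto
        have "u [^] s = a" 
        proof -
          have "u [^] s = a [^] (j * s)" using j aG by (simp add: nat_pow_pow)
          also have "\<dots> = (a [^] l) [^] t \<otimes> a" using aG by (simp add: st nat_pow_mult nat_pow_pow)
          finally show ?thesis using al aG by simp
        qed
        hence "w [^] s = x \<otimes> a \<otimes> inv x" unfolding w_def using conj_pow[OF xG uG] by simp
        moreover have "w [^] s \<in> D" using sub_pow_closed[OF sD wD] .
        ultimately show False using xX X_def by simp
      qed
      have "h = (h \<otimes> inv h') \<otimes> h'" using dG by (simp add: m_assoc)
      hence "h = h'" using u1 unfolding u_def using dG by simp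
      hence "d \<otimes> x = d' \<otimes> x" using eq dG xG by simp
      hence "d = d'" using dG xG by simp
      thus "d = d' \<and> h = h'" using \<open>h = h'\<close> by simp
    qed
    thus ?thesis unfolding DC_img using card_image card_cartesian_product by metis
  qed
  have DCsub: "DC x \<subseteq> carrier G" if "x \<in> carrier G" for x
    unfolding DC_img using DG HG that by auto
  have selfDC: "x \<in> DC x" if "x \<in> carrier G" for x
  proof -
    have "\<one> \<otimes> x \<otimes> \<one> \<in> DC x" unfolding DC_img
      using subgroup.one_closed[OF sD] subgroup.one_closed[OF sH]
      by (intro image_eqI[where x="(\<one>, \<one>)"]) auto
    thus ?thesis using that by simp
  qed
  have "\<exists>i<4. c i \<notin> D"
  proof (rule ccontr)
    assume "\<not> (\<exists>i<4. c i \<notin> D)"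
    hence cD: "c i \<in> D" if "i < 4" for i using that by auto
    have "E \<subseteq> D" unfolding E_def P_def
      using cD[of 0] cD[of 1] cD[of 2] cD[of 3] sD by (auto simp: sub_pow_closed subgroup.m_closed)
    hence "card E \<le> l * l" using l2 El Ecomm by (intro meta_bound[OF grp fin sD meta]) auto
    thus False using cardE p2 by simp
  qed
  then obtain i where i: "i < 4" "c i \<notin> D" by auto
  have "g i \<otimes> a \<otimes> inv (g i) = c i"
  proof -
    have "g i \<otimes> a \<otimes> inv (g i) = c i \<otimes> g i \<otimes> inv (g i)" using conj[OF i(1)] by simp
    thus ?thesis using cG[OF i(1)] gG[OF i(1)] by (simp add: m_assoc)
  qed
  hence x0X: "g i \<in> X" using i gG X_def by simp
  define x0 where "x0 = g i"
  have x0G: "x0 \<in> carrier G" using x0_def gG i by simp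
  have "\<exists>y\<in>X. y \<notin> DC x0"
  proof (rule ccontr)
    assume "\<not> (\<exists>y\<in>X. y \<notin> DC x0)"
    hence allin: "y \<in> DC x0" if "y \<in> X" for y using that by blast
    define F where "F = {f \<in> E. x0 \<otimes> f \<otimes> inv x0 \<in> D}"
    have EFH: "E \<subseteq> (\<lambda>(f, h). f \<otimes> h) ` (F \<times> H)"
    proof
      fix e assume eE: "e \<in> E"
      have eG: "e \<in> carrier G" using eE EG by auto
      have "(x0 \<otimes> e) \<otimes> a \<otimes> inv (x0 \<otimes> e) = x0 \<otimes> (e \<otimes> a) \<otimes> inv e \<otimes> inv x0"
        using x0G eG aG by (simp add: m_assoc inv_mult_group)
      also have "\<dots> = x0 \<otimes> a \<otimes> inv x0" using aE[OF eE] x0G eG aG by (simp add: m_assoc)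
      finally have "x0 \<otimes> e \<in> X" using x0X x0_def X_def x0G eG by simp
      hence "x0 \<otimes> e \<in> DC x0" by (rule allin)
      then obtain d h where dh: "d \<in> D" "h \<in> H" "x0 \<otimes> e = d \<otimes> x0 \<otimes> h" unfolding DC_img by auto
      have dG: "d \<in> carrier G" "h \<in> carrier G" using dh DG HG by auto
      obtain m :: nat where m: "inv h = a [^] m" using Hpow subgroup.m_inv_closed[OF sH dh(2)] by auto
      define f where "f = e \<otimes> inv h"
      have fE: "f \<in> E" unfolding f_def m using Eclos[OF eE] .
      have "x0 \<otimes> f \<otimes> inv x0 = (x0 \<otimes> e) \<otimes> inv h \<otimes> inv x0" unfolding f_def using x0G eG dG by (simp add: m_assoc)
      also have "\<dots> = d" unfolding dh(3) using x0G dG by (simp add: m_assoc)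
      finally have fF: "f \<in> F" unfolding F_def using fE dh(1) by simp
      have "e = f \<otimes> h" unfolding f_def using eG dG by (simp add: m_assoc)
      thus "e \<in> (\<lambda>(f, h). f \<otimes> h) ` (F \<times> H)" using fF dh(2) by force
    qed
    have FE: "F \<subseteq> E" unfolding F_def by auto
    define F' where "F' = (\<lambda>f. x0 \<otimes> f \<otimes> inv x0) ` F"
    have injc: "inj_on (\<lambda>f. x0 \<otimes> f \<otimes> inv x0) F"
      using FE EG x0G by (intro inj_onI) (auto simp: subset_iff)
    have "card F' \<le> l * l"
    proof (rule meta_bound[OF grp fin sD meta])
      show "0 < l" using l2 by simp
      show "F' \<subseteq> D" unfolding F'_def F_def by auto
      show "\<forall>f\<in>F'. f [^] l = \<one>"
      proof
        fix f assume "f \<in> F'"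
        then obtain u where u: "u \<in> F" "f = x0 \<otimes> u \<otimes> inv x0" unfolding F'_def by auto
        have uG: "u \<in> carrier G" using u FE EG by auto
        have "u [^] l = \<one>" using El u FE by auto
        thus "f [^] l = \<one>" using conj_pow[OF x0G uG, of l] u x0G by simp
      qed
      show "\<forall>f\<in>F'. \<forall>f'\<in>F'. f \<otimes> f' = f' \<otimes> f"
      proof (intro ballI)
        fix f f' assume "f \<in> F'" "f' \<in> F'"
        then obtain u v where uv: "u \<in> F" "v \<in> F" "f = x0 \<otimes> u \<otimes> inv x0" "f' = x0 \<otimes> v \<otimes> inv x0"
          unfolding F'_def by auto
        have uG: "u \<in> carrier G" "v \<in> carrier G" using uv FE EG by auto
        have "u \<otimes> v = v \<otimes> u" using Ecomm uv FE by auto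
        hence "u \<otimes> (v \<otimes> inv x0) = v \<otimes> (u \<otimes> inv x0)" using uG x0G by (simp add: m_assoc[symmetric])
        thus "f \<otimes> f' = f' \<otimes> f" unfolding uv using uG x0G by (simp add: m_assoc)
      qed
    qed
    hence cardF: "card F \<le> l * l" unfolding F'_def using card_image[OF injc] by simp
    have finF: "finite F" by (rule finite_subset[OF _ fin]) (use FE EG in blast)
    have finFH: "finite (F \<times> H)" using finF finH by simp
    have "card E \<le> card ((\<lambda>(f, h). f \<otimes> h) ` (F \<times> H))"
      by (rule card_mono[OF finite_imageI[OF finFH] EFH])
    also have "\<dots> \<le> card (F \<times> H)" by (rule card_image_le[OF finFH])
    also have "\<dots> = card F * card H" by (rule card_cartesian_product)
    also have "\<dots> \<le> l * l * l" by (rule mult_le_mono[OF cardF cardH])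
    finally have "l ^ 4 \<le> l * l * l" using cardE by simp
    thus False using p3 by simp
  qed
  then obtain y where y: "y \<in> X" "y \<notin> DC x0" by auto
  have yG: "y \<in> carrier G" using y X_def by auto
  define S where "S = {double_coset G D x H | x. x \<in> carrier G \<and> card (double_coset G D x H) = card D * card H}"
  have "DC x0 \<in> S" unfolding S_def using split[OF x0X[folded x0_def]] x0G DC_def by auto
  moreover have "DC y \<in> S" unfolding S_def using split[OF y(1)] yG DC_def by auto
  moreover have "DC x0 \<noteq> DC y" using selfDC[OF yG] y(2) by auto
  moreover have "finite S" unfolding S_def
    by (rule finite_subset[of _ "(\<lambda>x. double_coset G D x H) ` carrier G"]) (use fin in auto)
  ultimately have "card {DC x0, DC y} \<le> card S" by (intro card_mono) auto
  hence "card S \<ge> 2" using \<open>DC x0 \<noteq> DC y\<close> by simp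
  thus ?thesis unfolding split_count_def S_def H_def by simp
qed



definition af :: "nat \<Rightarrow> nat \<Rightarrow> nat \<Rightarrow> nat" where
  "af l L p = (if 1 \<le> p \<and> p \<le> l * L then (if p + L \<le> l * L then p + L else p + L - l * L) else p)"

lemma orbit_mem:
  assumes L: "0 < L" and j: "1 \<le> j" "j \<le> L"
  shows "p \<in> set (map (\<lambda>k. j + k * L) [0..<l]) \<longleftrightarrow> (1 \<le> p \<and> p \<le> l * L \<and> (p - 1) mod L = j - 1)"
proof
  assume "p \<in> set (map (\<lambda>k. j + k * L) [0..<l])"
  then obtain k where k: "k < l" "p = j + k * L" by auto
  have "p \<le> L + k * L" using k j by simp
  also have "\<dots> = (k + 1) * L" by simp
  also have "\<dots> \<le> l * L" using k by (intro mult_right_mono) auto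
  finally have "p \<le> l * L" .
  moreover have "(p - 1) mod L = j - 1"
  proof -
    have "p - 1 = (j - 1) + k * L" using k j by simp
    hence "(p - 1) mod L = (j - 1) mod L" by simp
    thus ?thesis using j by simp
  qed
  ultimately show "1 \<le> p \<and> p \<le> l * L \<and> (p - 1) mod L = j - 1" using k j by simp
next
  assume h: "1 \<le> p \<and> p \<le> l * L \<and> (p - 1) mod L = j - 1"
  define k where "k = (p - 1) div L"
  have pe: "p = j + k * L"
  proof -
    define m where "m = (p - 1) mod L"
    have e: "p - 1 = k * L + m" unfolding k_def m_def by simp
    have "m = j - 1" using h m_def by simp
    thus ?thesis using e h j by linarith
  qed
  have "p - 1 < l * L" using h by linarith
  hence "k < l" unfolding k_def using L by (simp add: div_less_iff_less_mult)
  thus "p \<in> set (map (\<lambda>k. j + k * L) [0..<l])" using pe by auto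
qed

lemma cyc_eq:
  assumes L: "0 < L" and j: "1 \<le> j" "j \<le> L"
  shows "cycle_of_list (map (\<lambda>k. j + k * L) [0..<l]) p =
    (if 1 \<le> p \<and> p \<le> l * L \<and> (p - 1) mod L = j - 1 then af l L p else p)"
proof (cases "1 \<le> p \<and> p \<le> l * L \<and> (p - 1) mod L = j - 1")
  case False
  hence "p \<notin> set (map (\<lambda>k. j + k * L) [0..<l])" using orbit_mem[OF L j] by blast
  hence "cycle_of_list (map (\<lambda>k. j + k * L) [0..<l]) p = p" by (rule id_outside_supp)
  thus ?thesis by (subst if_not_P[OF False])
next
  case True
  define cs where "cs = map (\<lambda>k. j + k * L) [0..<l]"
  have dist: "distinct cs" unfolding cs_def using L by (simp add: distinct_map inj_on_def)
  have len: "length cs = l" unfolding cs_def by simp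
  have "p \<in> set cs" using True orbit_mem[OF L j] cs_def by blast
  then obtain k where k: "k < l" "p = cs ! k" using in_set_conv_nth[of p cs] len by auto
  have pk: "p = j + k * L" using k cs_def by simp
  have rot: "map (cycle_of_list cs) cs = rotate1 cs"
    using cyclic_rotation[OF dist, of 1] by simp
  have "cycle_of_list cs p = map (cycle_of_list cs) cs ! k" using k len by simp
  also have "\<dots> = rotate1 cs ! k" using rot by simp
  also have "\<dots> = cs ! (Suc k mod l)" using k len by (simp add: nth_rotate1)
  also have "\<dots> = j + (Suc k mod l) * L" unfolding cs_def using k by simp
  also have "\<dots> = af l L p"
  proof (cases "Suc k < l")
    case True
    have "p + L = j + (Suc k) * L" using pk by simp
    moreover have "j + Suc k * L \<le> l * L"
    proof -
      have "j + Suc k * L \<le> L + Suc k * L" using j by simp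
      also have "\<dots> = Suc (Suc k) * L" by simp
      also have "\<dots> \<le> l * L" using True by (intro mult_right_mono) auto
      finally show ?thesis .
    qed
    ultimately show ?thesis unfolding af_def using True pk \<open>1 \<le> p \<and> p \<le> l * L \<and> _\<close> by simp
  next
    case False
    hence kl: "Suc k = l" using k by simp
    have "l * L = Suc k * L" using kl by simp
    hence "l * L = L + k * L" by simp
    hence "p + L = j + l * L" using pk by linarith
    moreover have "l * L < j + l * L" using j by simp
    ultimately show ?thesis unfolding af_def using kl \<open>1 \<le> p \<and> p \<le> l * L \<and> _\<close> by simp
  qed
  finally show ?thesis using True cs_def by simp
qed

lemma foldr_comp: "foldr (\<lambda>j f. (C j :: 'a \<Rightarrow> 'a) \<circ> f) xs h = foldr (\<lambda>j f. C j \<circ> f) xs id \<circ> h"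
  by (induct xs) (simp_all add: comp_assoc)

lemma af_props:
  assumes "0 < l" "0 < L" "1 \<le> p" "p \<le> l * L"
  shows "1 \<le> af l L p" "af l L p \<le> l * L" "(af l L p - 1) mod L = (p - 1) mod L"
proof -
  have lL: "L \<le> l * L" using assms by simp
  have h1: "p + L - l * L \<le> l * L" using assms lL by linarith
  show "1 \<le> af l L p" "af l L p \<le> l * L" unfolding af_def using assms h1 by auto
  show "(af l L p - 1) mod L = (p - 1) mod L"
  proof (cases "p + L \<le> l * L")
    case True
    hence "af l L p - 1 = (p - 1) + L" unfolding af_def using assms by simp
    thus ?thesis by simp
  next
    case False
    have e: "l * L = (l - 1) * L + L" using assms by (metis Suc_diff_1 mult_Suc add.commute)
    hence "p - 1 = (af l L p - 1) + (l - 1) * L" unfolding af_def using assms False by simp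
    thus ?thesis by simp
  qed
qed

lemma foldr_eq:
  assumes l: "0 < l" and L: "0 < L" and m: "m \<le> L"
  shows "foldr (\<lambda>j f. cycle_of_list (map (\<lambda>k. j + k * L) [0..<l]) \<circ> f) [1..<m+1] id p =
    (if 1 \<le> p \<and> p \<le> l * L \<and> (p - 1) mod L < m then af l L p else p)"
  using m
proof (induct m arbitrary: p)
  case 0 then show ?case by simp
next
  case (Suc m)
  let ?C = "\<lambda>j. cycle_of_list (map (\<lambda>k. j + k * L) [0..<l])"
  have IH: "foldr (\<lambda>j f. ?C j \<circ> f) [1..<m+1] id q =
    (if 1 \<le> q \<and> q \<le> l * L \<and> (q - 1) mod L < m then af l L q else q)" for q
    by (rule Suc.hyps) (use Suc.prems in simp)
  have "[1..<Suc m + 1] = [1..<m+1] @ [Suc m]" by simp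
  hence "foldr (\<lambda>j f. ?C j \<circ> f) [1..<Suc m+1] id p = foldr (\<lambda>j f. ?C j \<circ> f) [1..<m+1] id (?C (Suc m) p)"
    using foldr_comp[of ?C "[1..<m+1]" "?C (Suc m) \<circ> id"] by simp
  also have "\<dots> = (if 1 \<le> p \<and> p \<le> l * L \<and> (p - 1) mod L < Suc m then af l L p else p)"
  proof (cases "1 \<le> p \<and> p \<le> l * L \<and> (p - 1) mod L = m")
    case True
    have c1: "?C (Suc m) p = af l L p" using cyc_eq[OF L, where j="Suc m" and l=l and p=p] Suc.prems True by simp
    have nc: "\<not> (1 \<le> af l L p \<and> af l L p \<le> l * L \<and> (af l L p - 1) mod L < m)"
      using af_props[OF l L] True by simp
    have c2: "foldr (\<lambda>j f. ?C j \<circ> f) [1..<m+1] id (af l L p) = af l L p"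
      using IH[of "af l L p", unfolded if_not_P[OF nc]] .
    have c3: "1 \<le> p \<and> p \<le> l * L \<and> (p - 1) mod L < Suc m" using True by simp
    show ?thesis unfolding if_P[OF c3] c1 c2 ..
  next
    case False
    have c1: "?C (Suc m) p = p" using cyc_eq[OF L, where j="Suc m" and l=l and p=p] Suc.prems False by auto
    have eq: "(1 \<le> p \<and> p \<le> l * L \<and> (p - 1) mod L < Suc m) = (1 \<le> p \<and> p \<le> l * L \<and> (p - 1) mod L < m)"
      using False by auto
    show ?thesis unfolding c1 eq by (rule IH)
  qed
  finally show ?case .
qed

lemma alpha_eq:
  assumes "0 < l"
  shows "alpha l r = af l (l ^ (r - 1))"
proof
  fix p
  have L: "0 < l ^ (r - 1)" using assms by simp
  show "alpha l r p = af l (l ^ (r - 1)) p"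
    unfolding alpha_def using foldr_eq[OF assms L order_refl, of p] L
    by (simp add: af_def)
qed



definition blk :: "nat \<Rightarrow> nat \<Rightarrow> nat \<Rightarrow> nat" where
  "blk l s p = (if s < p \<and> p \<le> s + l then (if p < s + l then p + 1 else s + 1) else p)"

lemma alpha1_blk: "0 < l \<Longrightarrow> alpha l 1 = blk l 0"
  by (rule ext) (auto simp: alpha_eq af_def blk_def)

lemma conj_blk:
  assumes "0 < l" "0 < L" "s + l + L \<le> l * L"
  shows "af l L \<circ> blk l s = blk l (s + L) \<circ> af l L"
proof
  fix p
  show "(af l L \<circ> blk l s) p = (blk l (s + L) \<circ> af l L) p"
    using assms unfolding af_def blk_def by auto
qed

lemma blk_comm:
  assumes "s + l \<le> t"
  shows "blk l s \<circ> blk l t = blk l t \<circ> blk l s"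
proof
  fix p
  show "(blk l s \<circ> blk l t) p = (blk l t \<circ> blk l s) p"
    using assms unfolding blk_def by auto
qed

lemma blk_pow:
  assumes "0 < l"
  shows "(blk l s ^^ k) p = (if s < p \<and> p \<le> s + l then s + 1 + ((p - s - 1 + k) mod l) else p)"
proof (induct k)
  case 0
  then show ?case by auto
next
  case (Suc k)
  show ?case
  proof (cases "s < p \<and> p \<le> s + l")
    case True
    define m where "m = (p - s - 1 + k) mod l"
    have ml: "m < l" unfolding m_def using assms by simp
    have "(blk l s ^^ Suc k) p = blk l s (s + 1 + m)" using Suc True m_def by simp
    also have "\<dots> = s + 1 + (Suc m mod l)"
      using ml unfolding blk_def by (auto simp: mod_Suc)
    also have "Suc m mod l = (p - s - 1 + Suc k) mod l" unfolding m_def by (simp add: mod_Suc_eq)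
    finally show ?thesis using True by simp
  next
    case False
    have "(blk l s ^^ k) p = p" using Suc False by simp
    hence "(blk l s ^^ Suc k) p = blk l s p" by simp
    also have "\<dots> = p" unfolding blk_def by (subst if_not_P[OF False]) (rule refl)
    finally show ?thesis by (subst if_not_P[OF False])
  qed
qed

lemma blk_pow_l: "0 < l \<Longrightarrow> blk l s ^^ l = id"
proof
  fix p assume l: "0 < l"
  show "(blk l s ^^ l) p = id p"
  proof (cases "s < p \<and> p \<le> s + l")
    case True
    have d: "p - s - 1 < l" using True by linarith
    have "(p - s - 1 + l) mod l = (p - s - 1) mod l" by simp
    also have "\<dots> = p - s - 1" using d by simp
    finally have "(p - s - 1 + l) mod l = p - s - 1" .
    thus ?thesis using blk_pow[OF l] True by simp
  next
    case False
    have "(blk l s ^^ l) p = p" using blk_pow[OF l, where s=s and k=l and p=p] by (simp only: if_not_P[OF False])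
    thus ?thesis by simp
  qed
qed

lemma eval4:
  assumes l: "0 < l" and o: "o0 + l \<le> o1" "o1 + l \<le> o2" "o2 + l \<le> o3"
    and k: "k0 < l" "k1 < l" "k2 < l" "k3 < l"
  shows "((blk l o0 ^^ k0) \<circ> (blk l o1 ^^ k1) \<circ> (blk l o2 ^^ k2) \<circ> (blk l o3 ^^ k3)) (o0 + 1) = o0 + 1 + k0"
    "((blk l o0 ^^ k0) \<circ> (blk l o1 ^^ k1) \<circ> (blk l o2 ^^ k2) \<circ> (blk l o3 ^^ k3)) (o1 + 1) = o1 + 1 + k1"
    "((blk l o0 ^^ k0) \<circ> (blk l o1 ^^ k1) \<circ> (blk l o2 ^^ k2) \<circ> (blk l o3 ^^ k3)) (o2 + 1) = o2 + 1 + k2"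
    "((blk l o0 ^^ k0) \<circ> (blk l o1 ^^ k1) \<circ> (blk l o2 ^^ k2) \<circ> (blk l o3 ^^ k3)) (o3 + 1) = o3 + 1 + k3"
  using assms by (simp_all add: blk_pow)



lemma alpha_permutes:
  assumes l: "0 < l" and r: "1 \<le> r" "r \<le> n"
  shows "alpha l r permutes {1..l ^ n}"
proof -
  define L where "L = l ^ (r - 1)"
  have L0: "0 < L" using l L_def by simp
  have lL: "l * L \<le> l ^ n"
  proof -
    have "l * L = l ^ r" unfolding L_def using r by (cases r) auto
    also have "\<dots> \<le> l ^ n" using r l by (intro power_increasing) auto
    finally show ?thesis .
  qed
  have cp: "cycle_of_list (map (\<lambda>k. j + k * L) [0..<l]) permutes {1..l ^ n}" if j: "1 \<le> j" "j \<le> L" for j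
  proof (rule permutes_subset[OF cycle_permutes])
    show "set (map (\<lambda>k. j + k * L) [0..<l]) \<subseteq> {1..l ^ n}"
    proof
      fix p assume "p \<in> set (map (\<lambda>k. j + k * L) [0..<l])"
      hence "1 \<le> p \<and> p \<le> l * L" using orbit_mem[OF L0 j] by blast
      thus "p \<in> {1..l ^ n}" using lL by auto
    qed
  qed
  have gen: "foldr (\<lambda>j f. cycle_of_list (map (\<lambda>k. j + k * L) [0..<l]) \<circ> f) xs id permutes {1..l ^ n}"
    if "\<forall>j\<in>set xs. 1 \<le> j \<and> j \<le> L" for xs
    using that
  proof (induct xs)
    case Nil
    have "id permutes {1..l ^ n}" by (rule permutes_id)
    thus ?case by (simp add: id_def)
  next
    case (Cons j xs)
    let ?F = "\<lambda>j f. cycle_of_list (map (\<lambda>k. j + k * L) [0..<l]) \<circ> f"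
    have IH: "foldr ?F xs id permutes {1..l ^ n}" by (rule Cons.hyps) (use Cons.prems in simp)
    have cpj: "cycle_of_list (map (\<lambda>k. j + k * L) [0..<l]) permutes {1..l ^ n}" using cp Cons.prems by simp
    have e: "foldr ?F (j # xs) id = cycle_of_list (map (\<lambda>k. j + k * L) [0..<l]) \<circ> foldr ?F xs id" by simp
    show ?case unfolding e by (rule permutes_compose[OF IH cpj])
  qed
  have "foldr (\<lambda>j f. cycle_of_list (map (\<lambda>k. j + k * L) [0..<l]) \<circ> f) [1..<L + 1] id permutes {1..l ^ n}"
    by (rule gen) auto
  thus ?thesis unfolding alpha_def L_def .
qed

lemma final_step:
  fixes l n :: nat and D :: "(nat \<Rightarrow> nat) set" and ofs :: "nat \<Rightarrow> nat" and g :: "nat \<Rightarrow> nat \<Rightarrow> nat"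
  assumes pl: "prime l" and n: "1 \<le> n"
    and sD: "subgroup D (Gn l n)" and meta: "metacyclic_subgroup (Gn l n) D"
    and o0: "ofs 0 = 0" and o1: "ofs 0 + l \<le> ofs 1" and o2: "ofs 1 + l \<le> ofs 2" and o3: "ofs 2 + l \<le> ofs 3"
    and gG: "\<And>i. i < 4 \<Longrightarrow> g i \<in> carrier (Gn l n)"
    and conj: "\<And>i. i < 4 \<Longrightarrow> blk l (ofs i) \<circ> g i = g i \<circ> blk l 0"
  shows "split_count (Gn l n) D (Hsub l n) > 1"
proof -
  define G where "G = Gn l n"
  define S where "S = {alpha l r | r. 1 \<le> r \<and> r \<le> n}"
  have l0: "0 < l" using pl prime_gt_0_nat by blast
  have grp: "group G" unfolding G_def Gn_def by (rule group.group_subgroup_generated[OF sym_group_is_group])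
  interpret group G by (rule grp)
  have multG: "x \<otimes>\<^bsub>G\<^esub> y = x \<circ> y" for x y by (simp add: G_def Gn_def subgroup_generated_def sym_group_def)
  have oneG: "\<one>\<^bsub>G\<^esub> = id" by (simp add: G_def Gn_def subgroup_generated_def sym_group_def)
  have powG: "x [^]\<^bsub>G\<^esub> (k::nat) = x ^^ k" for x k
  proof (induct k)
    case 0 then show ?case by (simp add: oneG)
  next
    case (Suc k)
    have "x [^]\<^bsub>G\<^esub> Suc k = (x ^^ k) \<circ> x" using Suc by (simp add: multG)
    also have "\<dots> = x ^^ Suc k" by (rule funpow_Suc_right[symmetric])
    finally show ?case .
  qed
  have carrG: "carrier G = generate (sym_group (l ^ n)) (carrier (sym_group (l ^ n)) \<inter> S)"
    unfolding G_def Gn_def S_def by (simp add: carrier_subgroup_generated)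
  have finG: "finite (carrier G)"
  proof -
    have "carrier G \<subseteq> carrier (sym_group (l ^ n))"
      unfolding carrG by (rule group.generate_incl[OF sym_group_is_group]) blast
    moreover have "finite (carrier (sym_group (l ^ n)))"
      unfolding sym_group_def by (simp add: finite_permutations)
    ultimately show ?thesis by (rule finite_subset)
  qed
  have aG: "alpha l 1 \<in> carrier G"
  proof -
    have "alpha l 1 \<in> carrier (sym_group (l ^ n)) \<inter> S"
      using alpha_permutes[OF l0 order_refl n] n unfolding S_def by (auto simp: sym_group_carrier)
    thus ?thesis unfolding carrG by (rule generate.incl)
  qed
  have a_blk: "alpha l 1 = blk l 0" using alpha1_blk[OF l0] .
  define c where "c i = blk l (ofs i)" for i
  have cG: "c i \<in> carrier G" if i: "i < 4" for i
  proof -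
    have gi: "g i \<in> carrier G" using gG i G_def by simp
    have "c i = c i \<circ> (g i \<otimes>\<^bsub>G\<^esub> inv\<^bsub>G\<^esub> (g i))" using gi oneG by simp
    also have "\<dots> = (g i \<otimes>\<^bsub>G\<^esub> alpha l 1) \<otimes>\<^bsub>G\<^esub> inv\<^bsub>G\<^esub> (g i)"
      using conj[OF i] a_blk by (simp add: multG c_def comp_assoc[symmetric])
    finally show ?thesis using gi aG by simp
  qed
  have offs: "ofs i + l \<le> ofs j" if "i < j" "j < 4" for i j
  proof -
    have i: "i = 0 \<or> i = 1 \<or> i = 2" using that by linarith
    have j: "j = 1 \<or> j = 2 \<or> j = 3" using that by linarith
    show ?thesis using i j that o1 o2 o3 by (elim disjE) auto
  qed
  show ?thesis unfolding G_def[symmetric] Hsub_def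
  proof (rule abstract_main[OF grp finG pl aG _ sD[folded G_def] meta[folded G_def], where c=c and g=g])
    show "alpha l 1 [^]\<^bsub>G\<^esub> l = \<one>\<^bsub>G\<^esub>" using a_blk powG oneG blk_pow_l[OF l0] by simp
    show "c 0 = alpha l 1" using c_def o0 a_blk by simp
    show "\<And>i. i < 4 \<Longrightarrow> c i \<in> carrier G" by (rule cG)
    show "\<And>i. i < 4 \<Longrightarrow> g i \<in> carrier G" using gG G_def by simp
    show "\<And>i. i < 4 \<Longrightarrow> c i \<otimes>\<^bsub>G\<^esub> g i = g i \<otimes>\<^bsub>G\<^esub> alpha l 1"
      using conj a_blk by (simp add: multG c_def)
    show "\<And>i j. i < 4 \<Longrightarrow> j < 4 \<Longrightarrow> c i \<otimes>\<^bsub>G\<^esub> c j = c j \<otimes>\<^bsub>G\<^esub> c i"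
    proof -
      fix i j :: nat assume ij: "i < 4" "j < 4"
      show "c i \<otimes>\<^bsub>G\<^esub> c j = c j \<otimes>\<^bsub>G\<^esub> c i"
      proof (cases i j rule: linorder_cases)
        case less thus ?thesis using blk_comm[OF offs[OF less ij(2)]] by (simp add: multG c_def)
      next
        case equal thus ?thesis by simp
      next
        case greater thus ?thesis using blk_comm[OF offs[OF greater ij(1)]] by (simp add: multG c_def)
      qed
    qed
    show "\<And>i. i < 4 \<Longrightarrow> c i [^]\<^bsub>G\<^esub> l = \<one>\<^bsub>G\<^esub>" using powG oneG blk_pow_l[OF l0] by (simp add: c_def)
    show "\<And>k k'. k \<in> PiE {..<4::nat} (\<lambda>_. {..<l}) \<Longrightarrow> k' \<in> PiE {..<4::nat} (\<lambda>_. {..<l}) \<Longrightarrow>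
        c 0 [^]\<^bsub>G\<^esub> k 0 \<otimes>\<^bsub>G\<^esub> c 1 [^]\<^bsub>G\<^esub> k 1 \<otimes>\<^bsub>G\<^esub> c 2 [^]\<^bsub>G\<^esub> k 2 \<otimes>\<^bsub>G\<^esub> c 3 [^]\<^bsub>G\<^esub> k 3 =
        c 0 [^]\<^bsub>G\<^esub> k' 0 \<otimes>\<^bsub>G\<^esub> c 1 [^]\<^bsub>G\<^esub> k' 1 \<otimes>\<^bsub>G\<^esub> c 2 [^]\<^bsub>G\<^esub> k' 2 \<otimes>\<^bsub>G\<^esub> c 3 [^]\<^bsub>G\<^esub> k' 3 \<Longrightarrow> k = k'"
    proof -
      fix k k' assume k: "k \<in> PiE {..<4::nat} (\<lambda>_. {..<l})" and k': "k' \<in> PiE {..<4::nat} (\<lambda>_. {..<l})"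
        and eq: "c 0 [^]\<^bsub>G\<^esub> k 0 \<otimes>\<^bsub>G\<^esub> c 1 [^]\<^bsub>G\<^esub> k 1 \<otimes>\<^bsub>G\<^esub> c 2 [^]\<^bsub>G\<^esub> k 2 \<otimes>\<^bsub>G\<^esub> c 3 [^]\<^bsub>G\<^esub> k 3 =
        c 0 [^]\<^bsub>G\<^esub> k' 0 \<otimes>\<^bsub>G\<^esub> c 1 [^]\<^bsub>G\<^esub> k' 1 \<otimes>\<^bsub>G\<^esub> c 2 [^]\<^bsub>G\<^esub> k' 2 \<otimes>\<^bsub>G\<^esub> c 3 [^]\<^bsub>G\<^esub> k' 3"
      have kl: "k i < l" "k' i < l" if "i < 4" for i using k k' that by auto
      have eqf: "(blk l (ofs 0) ^^ k 0) \<circ> (blk l (ofs 1) ^^ k 1) \<circ> (blk l (ofs 2) ^^ k 2) \<circ> (blk l (ofs 3) ^^ k 3) =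
        (blk l (ofs 0) ^^ k' 0) \<circ> (blk l (ofs 1) ^^ k' 1) \<circ> (blk l (ofs 2) ^^ k' 2) \<circ> (blk l (ofs 3) ^^ k' 3)"
        using eq by (simp add: multG powG c_def)
      note ev = eval4[OF l0 o1 o2 o3]
      have "k i = k' i" if "i < 4" for i
      proof -
        have "i = 0 \<or> i = 1 \<or> i = 2 \<or> i = 3" using that by auto
        thus ?thesis
        proof (elim disjE)
          assume "i = 0" thus ?thesis using fun_cong[OF eqf, of "ofs 0 + 1"] ev(1)[of "k 0" "k 1" "k 2" "k 3"] ev(1)[of "k' 0" "k' 1" "k' 2" "k' 3"] kl by simp
        next
          assume "i = 1" thus ?thesis using fun_cong[OF eqf, of "ofs 1 + 1"] ev(2)[of "k 0" "k 1" "k 2" "k 3"] ev(2)[of "k' 0" "k' 1" "k' 2" "k' 3"] kl by simp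
        next
          assume "i = 2" thus ?thesis using fun_cong[OF eqf, of "ofs 2 + 1"] ev(3)[of "k 0" "k 1" "k 2" "k 3"] ev(3)[of "k' 0" "k' 1" "k' 2" "k' 3"] kl by simp
        next
          assume "i = 3" thus ?thesis using fun_cong[OF eqf, of "ofs 3 + 1"] ev(4)[of "k 0" "k 1" "k 2" "k 3"] ev(4)[of "k' 0" "k' 1" "k' 2" "k' 3"] kl by simp
        qed
      qed
      thus "k = k'" using PiE_ext[OF k k'] by auto
    qed
  qed
qed



lemma Gn_facts:
  assumes l0: "0 < l"
  shows "group (Gn l n)" "\<And>x y. x \<otimes>\<^bsub>Gn l n\<^esub> y = x \<circ> y" "\<one>\<^bsub>Gn l n\<^esub> = id"
    "\<And>r. 1 \<le> r \<Longrightarrow> r \<le> n \<Longrightarrow> alpha l r \<in> carrier (Gn l n)"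
proof -
  show "group (Gn l n)" unfolding Gn_def by (rule group.group_subgroup_generated[OF sym_group_is_group])
  show "\<And>x y. x \<otimes>\<^bsub>Gn l n\<^esub> y = x \<circ> y" by (simp add: Gn_def subgroup_generated_def sym_group_def)
  show "\<one>\<^bsub>Gn l n\<^esub> = id" by (simp add: Gn_def subgroup_generated_def sym_group_def)
  fix r assume r: "1 \<le> r" "r \<le> n"
  have "alpha l r \<in> carrier (sym_group (l ^ n)) \<inter> {alpha l r | r. 1 \<le> r \<and> r \<le> n}"
    using alpha_permutes[OF l0 r] r by (auto simp: sym_group_carrier)
  thus "alpha l r \<in> carrier (Gn l n)" unfolding Gn_def carrier_subgroup_generated by (rule generate.incl)
qed

theorem mainTheorem15:
  fixes l n :: nat and D :: "(nat \<Rightarrow> nat) set"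
  assumes "prime l" and "n \<ge> 2"
    and "n \<ge> 3 \<or> (n = 2 \<and> l \<ge> 5)"
    and "subgroup D (Gn l n)"
    and "metacyclic_subgroup (Gn l n) D"
  shows "split_count (Gn l n) D (Hsub l n) > 1"
proof -
  have pl: "prime l" and sD: "subgroup D (Gn l n)" and meta: "metacyclic_subgroup (Gn l n) D"
    using assms by auto
  have l2: "2 \<le> l" using pl prime_ge_2_nat by blast
  have l0: "0 < l" using l2 by simp
  note GF = Gn_facts[OF l0, where n=n]
  interpret GG: group "Gn l n" by (rule GF(1))
  have n1: "1 \<le> n" using assms(2) by simp
  have al2: "alpha l 2 = af l l" by (simp add: alpha_eq[OF l0])
  have a2G: "alpha l 2 \<in> carrier (Gn l n)" by (rule GF(4)) (use assms(2) in auto)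
  have idG: "id \<in> carrier (Gn l n)" using GG.one_closed GF(3) by simp
  have ll: "2 * l \<le> l * l" using l2 by (intro mult_le_mono1)
  have e1: "af l l \<circ> blk l 0 = blk l l \<circ> af l l"
    using conj_blk[OF l0 l0, of 0] ll by simp
  show ?thesis
  proof (cases "n \<ge> 3")
    case True
    have al3: "alpha l 3 = af l (l * l)" by (simp add: alpha_eq[OF l0] power2_eq_square)
    have a3G: "alpha l 3 \<in> carrier (Gn l n)" by (rule GF(4)) (use True in auto)
    have lll: "2 * (l * l) \<le> l * (l * l)" using l2 by (intro mult_le_mono1)
    have ll0: "0 < l * l" using l0 by simp
    have e2: "af l (l * l) \<circ> blk l 0 = blk l (l * l) \<circ> af l (l * l)"
      using conj_blk[OF l0 ll0, of 0] ll lll by simp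
    have e3: "af l (l * l) \<circ> blk l l = blk l (l + l * l) \<circ> af l (l * l)"
      using conj_blk[OF l0 ll0, of l] ll lll by simp
    define ofs :: "nat \<Rightarrow> nat" where "ofs i = (if i = 0 then 0 else if i = 1 then l else if i = 2 then l * l else l * l + l)" for i
    define g :: "nat \<Rightarrow> nat \<Rightarrow> nat" where "g i = (if i = 0 then id else if i = 1 then alpha l 2 else if i = 2 then alpha l 3 else alpha l 3 \<circ> alpha l 2)" for i
    show ?thesis
    proof (rule final_step[OF pl n1 sD meta, where ofs=ofs and g=g])
      show "ofs 0 = 0" "ofs 0 + l \<le> ofs 1" "ofs 2 + l \<le> ofs 3"
        unfolding ofs_def by auto
      have "ofs 1 + l = 2 * l" "ofs 2 = l * l" unfolding ofs_def by auto
      thus "ofs 1 + l \<le> ofs 2" using ll by linarith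
      fix i :: nat assume i: "i < 4"
      hence cases: "i = 0 \<or> i = 1 \<or> i = 2 \<or> i = 3" by auto
      have a32: "alpha l 3 \<circ> alpha l 2 \<in> carrier (Gn l n)" using GG.m_closed[OF a3G a2G] GF(2) by simp
      show "g i \<in> carrier (Gn l n)" using cases idG a2G a3G a32 unfolding g_def by auto
      have c3: "blk l (l * l + l) \<circ> (af l (l * l) \<circ> af l l) = af l (l * l) \<circ> af l l \<circ> blk l 0"
      proof -
        have "blk l (l * l + l) \<circ> (af l (l * l) \<circ> af l l) = (blk l (l + l * l) \<circ> af l (l * l)) \<circ> af l l"
          by (simp add: add.commute comp_assoc)
        also have "\<dots> = af l (l * l) \<circ> (blk l l \<circ> af l l)" unfolding e3[symmetric] by (simp add: comp_assoc)
        also have "\<dots> = af l (l * l) \<circ> af l l \<circ> blk l 0" unfolding e1[symmetric] by (simp add: comp_assoc)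
        finally show ?thesis .
      qed
      show "blk l (ofs i) \<circ> g i = g i \<circ> blk l 0"
        using cases unfolding ofs_def g_def al2 al3 using e1[symmetric] e2[symmetric] c3 by auto
    qed
  next
    case False
    hence n2: "n = 2" and l5: "5 \<le> l" using assms(2,3) by auto
    have l5l: "5 * l \<le> l * l" using l5 by (intro mult_le_mono1)
    have e2: "af l l \<circ> blk l l = blk l (l + l) \<circ> af l l"
      using conj_blk[OF l0 l0, of l] l5l by simp
    have e3: "af l l \<circ> blk l (l + l) = blk l (l + l + l) \<circ> af l l"
      using conj_blk[OF l0 l0, of "l + l"] l5l by simp
    define ofs :: "nat \<Rightarrow> nat" where "ofs i = i * l" for i
    define g :: "nat \<Rightarrow> nat \<Rightarrow> nat" where "g i = (if i = 0 then id else if i = 1 then alpha l 2 else if i = 2 then alpha l 2 \<circ> alpha l 2 else alpha l 2 \<circ> alpha l 2 \<circ> alpha l 2)" for i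
    show ?thesis
    proof (rule final_step[OF pl n1 sD meta, where ofs=ofs and g=g])
      show "ofs 0 = 0" "ofs 0 + l \<le> ofs 1" "ofs 1 + l \<le> ofs 2" "ofs 2 + l \<le> ofs 3"
        unfolding ofs_def by (auto simp: numeral_eq_Suc)
      fix i :: nat assume i: "i < 4"
      hence cases: "i = 0 \<or> i = 1 \<or> i = 2 \<or> i = 3" by auto
      have a22: "alpha l 2 \<circ> alpha l 2 \<in> carrier (Gn l n)" using GG.m_closed[OF a2G a2G] GF(2) by simp
      have a222: "alpha l 2 \<circ> alpha l 2 \<circ> alpha l 2 \<in> carrier (Gn l n)" using GG.m_closed[OF a22 a2G] GF(2) by simp
      show "g i \<in> carrier (Gn l n)" using cases idG a2G a22 a222 unfolding g_def by auto
      have c2: "blk l (2 * l) \<circ> (af l l \<circ> af l l) = af l l \<circ> af l l \<circ> blk l 0"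
      proof -
        have "blk l (2 * l) \<circ> (af l l \<circ> af l l) = (blk l (l + l) \<circ> af l l) \<circ> af l l"
          by (simp add: comp_assoc mult_2)
        also have "\<dots> = af l l \<circ> (blk l l \<circ> af l l)" unfolding e2[symmetric] by (simp add: comp_assoc)
        also have "\<dots> = af l l \<circ> af l l \<circ> blk l 0" unfolding e1[symmetric] by (simp add: comp_assoc)
        finally show ?thesis .
      qed
      have c3: "blk l (3 * l) \<circ> (af l l \<circ> af l l \<circ> af l l) = af l l \<circ> af l l \<circ> af l l \<circ> blk l 0"
      proof -
        have "blk l (3 * l) \<circ> (af l l \<circ> af l l \<circ> af l l) = (blk l (l + l + l) \<circ> af l l) \<circ> (af l l \<circ> af l l)"
          by (simp add: comp_assoc numeral_3_eq_3 add.assoc)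
        also have "\<dots> = af l l \<circ> (blk l (2 * l) \<circ> (af l l \<circ> af l l))" unfolding e3[symmetric] by (simp add: comp_assoc mult_2)
        also have "\<dots> = af l l \<circ> af l l \<circ> af l l \<circ> blk l 0" unfolding c2 by (simp add: comp_assoc)
        finally show ?thesis .
      qed
      show "blk l (ofs i) \<circ> g i = g i \<circ> blk l 0"
        using cases unfolding ofs_def g_def al2 using e1[symmetric] c2 c3 by auto
    qed
  qed
qed


end
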